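(* Each of the following four mechanisms for locating an obnoxious facility on $[0,1]$ is group strategyproof. Here, for a profile $\mathbf x\in[0,1]^n$, $n_1=|\{i:x_i\in[0,\tfrac12]\}|$ and $n_2=|\{i:x_i\in(\tfrac12,1]\}|$. (1) Majority Vote: output $y=0$ if $n_1\le n_2$, else $y=1$. (2) Output the uniform distribution over $[0,1]$. (3) Output $y=0$ with probability $\frac{n_2^2}{n_1^2+n_2^2}$ and $y=1$ with probability $\frac{n_1^2}{n_1^2+n_2^2}$. (4) For a fixed real parameter $p$, output $y=0$ with probability $P_0=\frac{n_2^2+2^pn_1n_2}{n_1^2+n_2^2+2^{p+1}n_1n_2}$ and $y=1$ with probability $1-P_0$.
   Context: Agents $i\in N=\{1,\dots,n\}$ have private locations $x_i\in[0,1]$; agent $i$'s utility from a (possibly random) facility location is its (expected) distance $\mathbb E|x_i-y|$. A mechanism $f$ is group strategyproof if for every profile $\mathbf x$, every coalition $S\subseteq N$ and every joint misreport $\mathbf x_S'$, there exists $i\in S$ whose utility under $f(\mathbf x_S',\mathbf x_{-S})$ is not strictly larger than under $f(\mathbf x)$. *)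

theory Defs
  imports "HOL-Probability.Probability"
begin

text \<open>Agents are 1..n; a profile is a function nat => real (only values on {1..n} matter).
  A (possibly random) facility location is a probability measure on the reals.\<close>

definition valid_profile :: "nat \<Rightarrow> (nat \<Rightarrow> real) \<Rightarrow> bool" where
  "valid_profile n x \<longleftrightarrow> (\<forall>i\<in>{1..n}. x i \<in> {0..1})"

definition n1 :: "nat \<Rightarrow> (nat \<Rightarrow> real) \<Rightarrow> nat" where
  "n1 n x = card {i\<in>{1..n}. x i \<in> {0..1/2}}"

definition n2 :: "nat \<Rightarrow> (nat \<Rightarrow> real) \<Rightarrow> nat" where
  "n2 n x = card {i\<in>{1..n}. x i \<in> {1/2<..1}}"

definition util :: "real measure \<Rightarrow> real \<Rightarrow> real" where
  "util M xi = integral\<^sup>L M (\<lambda>y. \<bar>xi - y\<bar>)"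

definition group_strategyproof :: "nat \<Rightarrow> ((nat \<Rightarrow> real) \<Rightarrow> real measure) \<Rightarrow> bool" where
  "group_strategyproof n f \<longleftrightarrow>
     (\<forall>x. valid_profile n x \<longrightarrow>
       (\<forall>S. S \<subseteq> {1..n} \<and> S \<noteq> {} \<longrightarrow>
         (\<forall>x'. valid_profile n x' \<and> (\<forall>i\<in>{1..n} - S. x' i = x i) \<longrightarrow>
            (\<exists>i\<in>S. util (f x') (x i) \<le> util (f x) (x i)))))"

definition zero_one :: "real \<Rightarrow> real measure" where
  "zero_one q = measure_pmf (map_pmf (\<lambda>b. if b then 0 else 1) (bernoulli_pmf q))"

definition mech_majority :: "nat \<Rightarrow> (nat \<Rightarrow> real) \<Rightarrow> real measure" where
  "mech_majority n x = measure_pmf (return_pmf (if n1 n x \<le> n2 n x then 0 else 1))"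

definition mech_uniform :: "nat \<Rightarrow> (nat \<Rightarrow> real) \<Rightarrow> real measure" where
  "mech_uniform n x = uniform_measure lborel {0..1}"

definition mech_square :: "nat \<Rightarrow> (nat \<Rightarrow> real) \<Rightarrow> real measure" where
  "mech_square n x = zero_one
     (real (n2 n x)^2 / (real (n1 n x)^2 + real (n2 n x)^2))"

definition mech_param :: "real \<Rightarrow> nat \<Rightarrow> (nat \<Rightarrow> real) \<Rightarrow> real measure" where
  "mech_param p n x = zero_one
     ((real (n2 n x)^2 + 2 powr p * real (n1 n x) * real (n2 n x)) /
      (real (n1 n x)^2 + real (n2 n x)^2 + 2 powr (p + 1) * real (n1 n x) * real (n2 n x)))"

end

theory Submission
  imports Defs
begin

lemma n12:
  assumes "valid_profile n x"
  shows "n1 n x + n2 n x = n"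
proof -
  have un: "{i\<in>{1..n}. x i \<in> {0..1/2}} \<union> {i\<in>{1..n}. x i \<in> {1/2<..1}} = {1..n}"
    using assms unfolding valid_profile_def by auto
  have "card ({i\<in>{1..n}. x i \<in> {0..1/2}} \<union> {i\<in>{1..n}. x i \<in> {1/2<..1}})
      = card {i\<in>{1..n}. x i \<in> {0..1/2}} + card {i\<in>{1..n}. x i \<in> {1/2<..1}}"
    by (rule card_Un_disjoint) auto
  then show ?thesis using un unfolding n1_def n2_def by simp
qed

lemma n2_le: "n2 n x \<le> n"
proof -
  have "n2 n x \<le> card {1..n}" unfolding n2_def by (rule card_mono) auto
  then show ?thesis by simp
qed

lemma gsp_generic:
  assumes U: "\<And>x z. valid_profile n x \<Longrightarrow> z \<in> {0..1} \<Longrightarrow>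
      util (f x) z = (1 - z) + Q (n2 n x) * (2 * z - 1)"
    and M: "\<And>b b'. b \<le> b' \<Longrightarrow> b' \<le> n \<Longrightarrow> Q b \<le> (Q b' :: real)"
  shows "group_strategyproof n f"
  unfolding group_strategyproof_def
proof (intro allI impI, elim conjE)
  fix x S x'
  assume vx: "valid_profile n x" and SS: "S \<subseteq> {1..n}" and Sne: "S \<noteq> {}"
    and vx': "valid_profile n x'" and same: "\<forall>i\<in>{1..n} - S. x' i = x i"
  define b where "b = n2 n x"
  define b' where "b' = n2 n x'"
  have xin: "x i \<in> {0..1}" if "i \<in> S" for i using vx SS that unfolding valid_profile_def by auto
  have bn: "b \<le> n" "b' \<le> n" unfolding b_def b'_def by (rule n2_le)+
  show "\<exists>i\<in>S. util (f x') (x i) \<le> util (f x) (x i)"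
  proof (cases "b < b'")
    case True
    have "\<exists>i\<in>S. x i \<le> 1/2"
    proof (rule ccontr)
      assume "\<not> ?thesis"
      then have "\<forall>i\<in>S. x i > 1/2" by auto
      have "{i\<in>{1..n}. x' i \<in> {1/2<..1}} \<subseteq> {i\<in>{1..n}. x i \<in> {1/2<..1}}"
      proof
        fix i assume "i \<in> {i\<in>{1..n}. x' i \<in> {1/2<..1}}"
        then show "i \<in> {i\<in>{1..n}. x i \<in> {1/2<..1}}"
          using same xin[of i] \<open>\<forall>i\<in>S. x i > 1/2\<close> by (cases "i \<in> S") auto
      qed
      then have "b' \<le> b" unfolding b_def b'_def n2_def by (intro card_mono) auto
      then show False using True by simp
    qed
    then obtain i where i: "i \<in> S" "x i \<le> 1/2" by auto
    have "Q b' * (2 * x i - 1) \<le> Q b * (2 * x i - 1)"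
      using M[of b b'] True bn i by (intro mult_right_mono_neg) auto
    then have "util (f x') (x i) \<le> util (f x) (x i)"
      using U[OF vx' xin[OF i(1)]] U[OF vx xin[OF i(1)]] unfolding b_def b'_def by linarith
    then show ?thesis using i(1) by blast
  next
    case False
    show ?thesis
    proof (cases "b' < b")
      case True
      have "\<exists>i\<in>S. x i > 1/2"
      proof (rule ccontr)
        assume "\<not> ?thesis"
        then have "\<forall>i\<in>S. x i \<le> 1/2" by auto
        have "{i\<in>{1..n}. x i \<in> {1/2<..1}} \<subseteq> {i\<in>{1..n}. x' i \<in> {1/2<..1}}"
        proof
          fix i assume "i \<in> {i\<in>{1..n}. x i \<in> {1/2<..1}}"
          then show "i \<in> {i\<in>{1..n}. x' i \<in> {1/2<..1}}"
            using same \<open>\<forall>i\<in>S. x i \<le> 1/2\<close> by (cases "i \<in> S") auto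
        qed
        then have "b \<le> b'" unfolding b_def b'_def n2_def by (intro card_mono) auto
        then show False using True by simp
      qed
      then obtain i where i: "i \<in> S" "x i > 1/2" by auto
      have "Q b' * (2 * x i - 1) \<le> Q b * (2 * x i - 1)"
        using M[of b' b] True bn i by (intro mult_right_mono) auto
      then have "util (f x') (x i) \<le> util (f x) (x i)"
        using U[OF vx' xin[OF i(1)]] U[OF vx xin[OF i(1)]] unfolding b_def b'_def by linarith
      then show ?thesis using i(1) by blast
    next
      case F2: False
      then have "b = b'" using False by simp
      then obtain i where "i \<in> S" using Sne by auto
      then show ?thesis using \<open>b = b'\<close> U[OF vx' xin] U[OF vx xin] unfolding b_def b'_def by fastforce
    qed
  qed
qed

lemma util_zero_one:
  assumes "0 \<le> q" "q \<le> 1" "z \<in> {0..1}"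
  shows "util (zero_one q) z = (1 - z) + q * (2 * z - 1)"
  using assms unfolding util_def zero_one_def by (simp add: algebra_simps)

lemma gsp_zero_one:
  assumes E: "\<And>x. valid_profile n x \<Longrightarrow> f x = zero_one (Q (n2 n x))"
    and R: "\<And>b. b \<le> n \<Longrightarrow> 0 \<le> Q b \<and> Q b \<le> 1"
    and M: "\<And>b b'. b \<le> b' \<Longrightarrow> b' \<le> n \<Longrightarrow> Q b \<le> (Q b' :: real)"
  shows "group_strategyproof n f"
proof (rule gsp_generic[where Q = Q, OF _ M])
  fix x z assume "valid_profile n x" "z \<in> {0..1::real}"
  then show "util (f x) z = 1 - z + Q (n2 n x) * (2 * z - 1)"
    using E R[OF n2_le] util_zero_one by auto
qed auto

lemma poly_ineq:
  fixes x b d c :: real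
  assumes "0 \<le> x" "0 \<le> b" "0 \<le> d" "0 \<le> c"
  shows "b*x*(b + c*(x+d))*(x + c*(b+d)) \<le> (b+d)*(x+d)*((b+d) + c*x)*((x+d) + c*b)"
proof -
  have e: "(b+d)*(x+d)*((b+d) + c*x)*((x+d) + c*b) - b*x*(b + c*(x+d))*(x + c*(b+d)) = 1*d^4 + 2*b^1*d^3 + 1*b^1*d^3*c^1 + 1*b^2*d^2 + 2*b^2*d^2*c^1 + 1*b^3*d^1*c^1 + 2*x^1*d^3 + 1*x^1*d^3*c^1 + 4*x^1*b^1*d^2 + 2*x^1*b^1*d^2*c^1 + 2*x^1*b^2*d^1 + 1*x^1*b^2*d^1*c^1 + 1*x^2*d^2 + 2*x^2*d^2*c^1 + 2*x^2*b^1*d^1 + 1*x^2*b^1*d^1*c^1 + 1*x^3*d^1*c^1"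
    by (simp add: algebra_simps power2_eq_square power3_eq_cube power4_eq_xxxx)
  have "0 \<le> 1*d^4 + 2*b^1*d^3 + 1*b^1*d^3*c^1 + 1*b^2*d^2 + 2*b^2*d^2*c^1 + 1*b^3*d^1*c^1 + 2*x^1*d^3 + 1*x^1*d^3*c^1 + 4*x^1*b^1*d^2 + 2*x^1*b^1*d^2*c^1 + 2*x^1*b^2*d^1 + 1*x^1*b^2*d^1*c^1 + 1*x^2*d^2 + 2*x^2*d^2*c^1 + 2*x^2*b^1*d^1 + 1*x^2*b^1*d^1*c^1 + 1*x^3*d^1*c^1"
    using assms by (intro add_nonneg_nonneg mult_nonneg_nonneg zero_le_power) auto
  then show ?thesis using e by linarith
qed

definition Qc :: "real \<Rightarrow> real \<Rightarrow> real \<Rightarrow> real" where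
  "Qc c n b = (b^2 + c*(n-b)*b) / ((n-b)^2 + b^2 + 2*c*(n-b)*b)"

lemma Qc_range:
  assumes "0 \<le> c" "0 \<le> b" "b \<le> n"
  shows "0 \<le> Qc c n b \<and> Qc c n b \<le> 1"
proof -
  have N: "0 \<le> b^2 + c*(n-b)*b" using assms by simp
  have M: "0 \<le> (n-b)^2 + c*(n-b)*b" using assms by simp
  have D: "(n-b)^2 + b^2 + 2*c*(n-b)*b = (b^2 + c*(n-b)*b) + ((n-b)^2 + c*(n-b)*b)"
    by (simp add: algebra_simps)
  have g: "\<And>N M::real. 0 \<le> N \<Longrightarrow> 0 \<le> M \<Longrightarrow> 0 \<le> N / (N + M) \<and> N / (N + M) \<le> 1"
    by (auto simp: divide_le_eq)
  show ?thesis unfolding Qc_def D using g[OF N M] by blast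
qed

lemma Qc_mono:
  assumes "0 \<le> c" "0 \<le> b" "b \<le> b'" "b' \<le> n"
  shows "Qc c n b \<le> Qc c n b'"
proof (cases "n = 0")
  case True
  then have "b = b'" using assms by simp
  then show ?thesis by simp
next
  case False
  define a where "a = n - b"
  define a' where "a' = n - b'"
  define d where "d = b' - b"
  have a: "a = a' + d" "b' = b + d" unfolding a_def a'_def d_def by simp_all
  have nn: "0 \<le> a'" "0 \<le> d" "0 \<le> a" using assms unfolding a_def a'_def d_def by simp_all
  have pos: "0 < a^2 + b^2" using False assms unfolding a_def
    by (smt (verit) sum_power2_eq_zero_iff power2_less_0 zero_le_power2)
  have pos': "0 < a'^2 + b'^2" using False assms unfolding a'_def
    by (smt (verit) sum_power2_eq_zero_iff power2_less_0 zero_le_power2)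
  have D: "0 < a^2 + b^2 + 2*c*a*b" using pos nn assms by (smt (verit) mult_nonneg_nonneg)
  have D': "0 < a'^2 + b'^2 + 2*c*a'*b'" using pos' nn assms by (smt (verit) mult_nonneg_nonneg)
  have P: "b*a'*(b + c*(a'+d))*(a' + c*(b+d)) \<le> (b+d)*(a'+d)*((b+d) + c*a')*((a'+d) + c*b)"
    using poly_ineq[of a' b d c] nn assms by simp
  have "(b^2 + c*a*b) * (a'^2 + b'^2 + 2*c*a'*b') \<le> (b'^2 + c*a'*b') * (a^2 + b^2 + 2*c*a*b)"
  proof -
    have "(b'^2 + c*a'*b') * (a^2 + b^2 + 2*c*a*b) - (b^2 + c*a*b) * (a'^2 + b'^2 + 2*c*a'*b')
        = (b+d)*(a'+d)*((b+d) + c*a')*((a'+d) + c*b) - b*a'*(b + c*(a'+d))*(a' + c*(b+d))"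
      unfolding a by (simp add: algebra_simps power2_eq_square)
    then show ?thesis using P by linarith
  qed
  then have "(b^2 + c*a*b) / (a^2 + b^2 + 2*c*a*b) \<le> (b'^2 + c*a'*b') / (a'^2 + b'^2 + 2*c*a'*b')"
    using D D' by (simp add: divide_le_eq le_divide_eq mult.commute)
  then show ?thesis unfolding Qc_def a_def a'_def by (simp add: mult.commute mult.left_commute)
qed

lemma gsp_Qc:
  assumes c: "0 \<le> c"
    and E: "\<And>x. valid_profile n x \<Longrightarrow> f x = zero_one (Qc c (real n) (real (n2 n x)))"
  shows "group_strategyproof n f"
  by (rule gsp_zero_one[where Q = "\<lambda>b. Qc c (real n) (real b)", OF E Qc_range Qc_mono])
     (use c in auto)

theorem lemma2:
  fixes n :: nat and p :: real
  shows "group_strategyproof n (mech_majority n)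
       \<and> group_strategyproof n (mech_uniform n)
       \<and> group_strategyproof n (mech_square n)
       \<and> group_strategyproof n (mech_param p n)"
proof (intro conjI)
  show "group_strategyproof n (mech_majority n)"
  proof (rule gsp_generic[where Q = "\<lambda>b. if n - b \<le> b then 1 else 0"])
    fix x and z :: real assume vx: "valid_profile n x" and z: "z \<in> {0..1}"
    have "n1 n x = n - n2 n x" using n12[OF vx] by simp
    then show "util (mech_majority n x) z = 1 - z + (if n - n2 n x \<le> n2 n x then 1 else 0) * (2 * z - 1)"
      using z unfolding util_def mech_majority_def by auto
  next
    fix b b' :: nat assume "b \<le> b'" "b' \<le> n"
    then show "(if n - b \<le> b then 1 else 0) \<le> (if n - b' \<le> b' then 1 else (0::real))" by auto
  qed
  show "group_strategyproof n (mech_uniform n)"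
    unfolding group_strategyproof_def mech_uniform_def by blast
  show "group_strategyproof n (mech_square n)"
  proof (rule gsp_Qc[where c = 0])
    fix x assume vx: "valid_profile n x"
    have "real (n1 n x) = real n - real (n2 n x)" using n12[OF vx] by linarith
    then show "mech_square n x = zero_one (Qc 0 (real n) (real (n2 n x)))"
      unfolding mech_square_def Qc_def by simp
  qed simp
  show "group_strategyproof n (mech_param p n)"
  proof (rule gsp_Qc[where c = "2 powr p"])
    fix x assume vx: "valid_profile n x"
    have "real (n1 n x) = real n - real (n2 n x)" using n12[OF vx] by linarith
    moreover have "(2::real) powr (p + 1) = 2 * 2 powr p" by (simp add: powr_add)
    ultimately show "mech_param p n x = zero_one (Qc (2 powr p) (real n) (real (n2 n x)))"
      unfolding mech_param_def Qc_def by (simp add: mult.assoc)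
  qed simp
qed

end
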